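(* Let $\Gamma$ be a connected countable graph and let $(B_n)_{n\in\mathbb N}$ satisfy $(\dagger)$. Let $u,v\in V(\Gamma)$ be distinct and let $P$ be a path with end-vertices $u$ and $v$ such that no vertex of $V(P)\setminus\{u,v\}$ is critical. Then no maximum matching misses both $u$ and $v$.
   Context: Condition $(\dagger)$ on $(B_n)_{n\in\mathbb N}$: each $B_n\subseteq V(\Gamma)$ is finite, $B_n\subseteq B_{n+1}$, $\bigcup_n B_n=V(\Gamma)$, and the subgraph induced on each $B_n$ is connected. A matching $M$ misses a vertex $x$ if no edge of $M$ contains $x$. The miss sequence of $M$ is $(m_n)_{n\in\mathbb N}$ with $m_n$ the number of vertices of $B_n$ missed by $M$. For matchings $M_1,M_2$ with miss sequences $(a_n),(b_n)$, write $M_1<M_2$ if there is $N$ with $a_n=b_n$ for all $n<N$ and $a_N>b_N$. A maximum matching is a matching $M$ for which no matching $M'$ satisfies $M<M'$. A vertex is critical if no maximum matching misses it. *)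

theory Defs
  imports Main "HOL-Library.Countable_Set"
begin

definition graph :: "'a set \<Rightarrow> ('a \<Rightarrow> 'a \<Rightarrow> bool) \<Rightarrow> bool" where
  "graph V E \<longleftrightarrow> (\<forall>x y. E x y \<longrightarrow> x \<in> V \<and> y \<in> V) \<and> (\<forall>x y. E x y \<longrightarrow> E y x) \<and> (\<forall>x. \<not> E x x)"

definition is_path :: "'a set \<Rightarrow> ('a \<Rightarrow> 'a \<Rightarrow> bool) \<Rightarrow> 'a list \<Rightarrow> bool" where
  "is_path V E p \<longleftrightarrow> p \<noteq> [] \<and> distinct p \<and> set p \<subseteq> V \<and>
     (\<forall>i. Suc i < length p \<longrightarrow> E (p ! i) (p ! Suc i))"

definition connected_graph :: "'a set \<Rightarrow> ('a \<Rightarrow> 'a \<Rightarrow> bool) \<Rightarrow> bool" where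
  "connected_graph V E \<longleftrightarrow> V \<noteq> {} \<and>
     (\<forall>x\<in>V. \<forall>y\<in>V. \<exists>p. is_path V E p \<and> hd p = x \<and> last p = y)"

text \<open>Condition (dagger) on the exhaustion B.\<close>
definition exhaustion :: "'a set \<Rightarrow> ('a \<Rightarrow> 'a \<Rightarrow> bool) \<Rightarrow> (nat \<Rightarrow> 'a set) \<Rightarrow> bool" where
  "exhaustion V E B \<longleftrightarrow>
     (\<forall>n. finite (B n) \<and> B n \<subseteq> V \<and> B n \<subseteq> B (Suc n)) \<and> (\<Union>n. B n) = V \<and>
     (\<forall>n. \<forall>x\<in>B n. \<forall>y\<in>B n. \<exists>p. is_path (B n) E p \<and> hd p = x \<and> last p = y)"

definition matching :: "('a \<Rightarrow> 'a \<Rightarrow> bool) \<Rightarrow> 'a set set \<Rightarrow> bool" where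
  "matching E M \<longleftrightarrow> (\<forall>e\<in>M. \<exists>x y. E x y \<and> e = {x, y}) \<and>
     (\<forall>e\<in>M. \<forall>f\<in>M. e \<noteq> f \<longrightarrow> e \<inter> f = {})"

definition misses :: "'a set set \<Rightarrow> 'a \<Rightarrow> bool" where
  "misses M x \<longleftrightarrow> \<not> (\<exists>e\<in>M. x \<in> e)"

definition miss_seq :: "(nat \<Rightarrow> 'a set) \<Rightarrow> 'a set set \<Rightarrow> nat \<Rightarrow> nat" where
  "miss_seq B M n = card {x \<in> B n. misses M x}"

definition matching_less :: "(nat \<Rightarrow> 'a set) \<Rightarrow> 'a set set \<Rightarrow> 'a set set \<Rightarrow> bool" where
  "matching_less B M1 M2 \<longleftrightarrow> (\<exists>N. (\<forall>n<N. miss_seq B M1 n = miss_seq B M2 n) \<and>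
     miss_seq B M1 N > miss_seq B M2 N)"

definition maximum_matching :: "('a \<Rightarrow> 'a \<Rightarrow> bool) \<Rightarrow> (nat \<Rightarrow> 'a set) \<Rightarrow> 'a set set \<Rightarrow> bool" where
  "maximum_matching E B M \<longleftrightarrow> matching E M \<and> \<not> (\<exists>M'. matching E M' \<and> matching_less B M M')"

definition critical :: "('a \<Rightarrow> 'a \<Rightarrow> bool) \<Rightarrow> (nat \<Rightarrow> 'a set) \<Rightarrow> 'a \<Rightarrow> bool" where
  "critical E B x \<longleftrightarrow> \<not> (\<exists>M. maximum_matching E B M \<and> misses M x)"

end

theory Submission
  imports Defs
begin

lemma seq_eq_max:
  assumes "maximum_matching E B M" "maximum_matching E B M'"
  shows "miss_seq B M = miss_seq B M'"
proof (rule ccontr)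
  assume ne: "miss_seq B M \<noteq> miss_seq B M'"
  then have ex: "\<exists>n. miss_seq B M n \<noteq> miss_seq B M' n" by auto
  define N where "N = (LEAST n. miss_seq B M n \<noteq> miss_seq B M' n)"
  have lt: "\<forall>n<N. miss_seq B M n = miss_seq B M' n"
    using not_less_Least N_def by blast
  have "miss_seq B M N \<noteq> miss_seq B M' N"
    using LeastI_ex[OF ex] N_def by simp
  then have "matching_less B M M' \<or> matching_less B M' M"
    unfolding matching_less_def using lt
    by (metis linorder_neqE_nat)
  then show False using assms unfolding maximum_matching_def by blast
qed

lemma max_of_eq:
  assumes "maximum_matching E B M" "matching E M2" "miss_seq B M2 = miss_seq B M"
  shows "maximum_matching E B M2"
  using assms unfolding maximum_matching_def matching_less_def by simp

lemma sum_eq: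
  fixes s s1 s2 :: "nat \<Rightarrow> nat"
  assumes sum: "\<And>n. s1 n + s2 n = 2 * s n"
    and n1: "\<not> (\<exists>N. (\<forall>n<N. s n = s1 n) \<and> s N > s1 N)"
    and n2: "\<not> (\<exists>N. (\<forall>n<N. s n = s2 n) \<and> s N > s2 N)"
  shows "s1 = s"
proof (rule ccontr)
  assume "s1 \<noteq> s"
  then have ex: "\<exists>n. s1 n \<noteq> s n" by auto
  define N where "N = (LEAST n. s1 n \<noteq> s n)"
  have lt: "\<forall>n<N. s1 n = s n"
    using not_less_Least N_def by blast
  have lt2: "\<forall>n<N. s2 n = s n" using lt sum by (metis add_left_imp_eq mult_2)
  have "s1 N \<noteq> s N"
    using LeastI_ex[OF ex] N_def by simp
  then show False
  proof (cases "s1 N < s N")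
    case True then show ?thesis using n1 lt by (metis)
  next
    case False
    then have "s2 N < s N" using \<open>s1 N \<noteq> s N\<close> sum[of N] by linarith
    then show ?thesis using n2 lt2 by metis
  qed
qed

lemma card_split:
  assumes "finite A"
  shows "card {x\<in>A. P x} = card {x\<in>A. x \<in> C \<and> P x} + card {x\<in>A. x \<notin> C \<and> P x}"
proof -
  have "{x\<in>A. P x} = {x\<in>A. x \<in> C \<and> P x} \<union> {x\<in>A. x \<notin> C \<and> P x}" by auto
  moreover have "card ({x\<in>A. x \<in> C \<and> P x} \<union> {x\<in>A. x \<notin> C \<and> P x}) =
     card {x\<in>A. x \<in> C \<and> P x} + card {x\<in>A. x \<notin> C \<and> P x}"
    by (rule card_Un_disjoint) (use assms in auto)
  ultimately show ?thesis by simp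
qed

lemma card_swap:
  assumes "finite A"
    and p1: "\<And>x. P1 x = (if x \<in> C then Q2 x else Q1 x)"
    and p2: "\<And>x. P2 x = (if x \<in> C then Q1 x else Q2 x)"
  shows "card {x\<in>A. P1 x} + card {x\<in>A. P2 x} = card {x\<in>A. Q1 x} + card {x\<in>A. Q2 x}"
proof -
  have a: "{x\<in>A. x \<in> C \<and> P1 x} = {x\<in>A. x \<in> C \<and> Q2 x}" using p1 by auto
  have b: "{x\<in>A. x \<notin> C \<and> P1 x} = {x\<in>A. x \<notin> C \<and> Q1 x}" using p1 by auto
  have c: "{x\<in>A. x \<in> C \<and> P2 x} = {x\<in>A. x \<in> C \<and> Q1 x}" using p2 by auto
  have d: "{x\<in>A. x \<notin> C \<and> P2 x} = {x\<in>A. x \<notin> C \<and> Q2 x}" using p2 by auto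
  show ?thesis
    using card_split[OF assms(1), of P1 C] card_split[OF assms(1), of P2 C]
      card_split[OF assms(1), of Q1 C] card_split[OF assms(1), of Q2 C] a b c d
    by simp
qed

lemma matching_edge:
  assumes "matching E M" "e \<in> M"
  obtains p q where "E p q" "e = {p,q}"
proof -
  have "\<forall>e\<in>M. \<exists>x y. E x y \<and> e = {x, y}" using assms(1) unfolding matching_def by (rule conjunct1)
  then have "\<exists>x y. E x y \<and> e = {x, y}" using assms(2) by (rule bspec)
  then show ?thesis using that by blast
qed

lemma partner_unique:
  assumes "matching E M" "{a,b} \<in> M" "{a,c} \<in> M"
  shows "b = c"
proof -
  have d: "\<forall>e\<in>M. \<forall>f\<in>M. e \<noteq> f \<longrightarrow> e \<inter> f = {}" using assms(1) unfolding matching_def by blast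
  have "a \<in> {a,b} \<inter> {a,c}" by simp
  then have "{a,b} = {a,c}" using d assms(2,3) by (metis empty_iff)
  then show ?thesis by (metis doubleton_eq_iff)
qed

lemma covered_partner:
  assumes "matching E M" "\<not> misses M a"
  shows "\<exists>b. {a,b} \<in> M"
proof -
  obtain e where e: "e \<in> M" "a \<in> e" using assms(2) unfolding misses_def by blast
  then obtain p q where pq: "e = {p,q}" using matching_edge[OF assms(1)] by metis
  show ?thesis
  proof (cases "a = p")
    case True then show ?thesis using e pq by blast
  next
    case False then have "a = q" using e pq by blast
    then have "{a,p} \<in> M" using e pq by (simp add: insert_commute)
    then show ?thesis by blast
  qed
qed
lemma swap:
  assumes m: "matching E M" and m': "matching E M'"
    and cl: "\<And>e. e \<in> (M - M') \<union> (M' - M) \<Longrightarrow> e \<inter> C \<noteq> {} \<Longrightarrow> e \<subseteq> C"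
  defines "M1 \<equiv> {e\<in>M. e \<inter> C = {}} \<union> {e\<in>M'. e \<inter> C \<noteq> {}}"
  shows "matching E M1"
    and "\<And>w. misses M1 w = (if w \<in> C then misses M' w else misses M w)"
proof -
  show "matching E M1"
    unfolding matching_def
  proof (intro conjI ballI impI)
    fix e assume "e \<in> M1"
    then show "\<exists>x y. E x y \<and> e = {x, y}"
      using m m' unfolding M1_def matching_def by blast
  next
    fix e f assume ef: "e \<in> M1" "f \<in> M1" "e \<noteq> f"
    show "e \<inter> f = {}"
    proof (rule ccontr)
      assume ne: "e \<inter> f \<noteq> {}"
      then obtain w where w: "w \<in> e" "w \<in> f" by blast
      have dM: "\<And>e f. e \<in> M \<Longrightarrow> f \<in> M \<Longrightarrow> e \<noteq> f \<Longrightarrow> e \<inter> f = {}"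
        using m unfolding matching_def by blast
      have dM': "\<And>e f. e \<in> M' \<Longrightarrow> f \<in> M' \<Longrightarrow> e \<noteq> f \<Longrightarrow> e \<inter> f = {}"
        using m' unfolding matching_def by blast
      have mixed: "False" if a: "e' \<in> M" "e' \<inter> C = {}" "f' \<in> M'" "f' \<inter> C \<noteq> {}" "e' \<noteq> f'"
        "w \<in> e'" "w \<in> f'" for e' f'
      proof (cases "f' \<in> M")
        case True then show ?thesis using dM[of e' f'] a by blast
      next
        case False
        then have "f' \<subseteq> C" using cl[of f'] a by blast
        then show ?thesis using a by blast
      qed
      show False using ef w ne dM dM' mixed unfolding M1_def by blast
    qed
  qed
next
  fix w
  show "misses M1 w = (if w \<in> C then misses M' w else misses M w)"
  proof (cases "w \<in> C")
    case True
    then show ?thesis unfolding misses_def M1_def by auto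
  next
    case False
    have "(\<exists>e\<in>M1. w \<in> e) = (\<exists>e\<in>M. w \<in> e)"
    proof
      assume "\<exists>e\<in>M1. w \<in> e"
      then obtain e where e: "e \<in> M1" "w \<in> e" by blast
      show "\<exists>e\<in>M. w \<in> e"
      proof (cases "e \<in> M")
        case True then show ?thesis using e by blast
      next
        case False
        then have "e \<in> M'" "e \<inter> C \<noteq> {}" using e unfolding M1_def by auto
        then have "e \<subseteq> C" using cl[of e] False by blast
        then show ?thesis using e \<open>w \<notin> C\<close> by blast
      qed
    next
      assume "\<exists>e\<in>M. w \<in> e"
      then obtain e where e: "e \<in> M" "w \<in> e" by blast
      show "\<exists>e\<in>M1. w \<in> e"
      proof (cases "e \<inter> C = {}")
        case True then show ?thesis using e unfolding M1_def by blast
      next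
        case False
        show ?thesis
        proof (cases "e \<in> M'")
          case True then show ?thesis using e False unfolding M1_def by blast
        next
          case f2: False
          then have "e \<subseteq> C" using cl[of e] False e by blast
          then show ?thesis using e \<open>w \<notin> C\<close> by blast
        qed
      qed
    qed
    then show ?thesis using False unfolding misses_def by simp
  qed
qed


lemma augment:
  assumes ex: "exhaustion V E B" and g: "graph V E" and mM: "maximum_matching E B M"
    and eab: "E a b" and ma: "misses M a" and mb: "misses M b"
  shows False
proof -
  have m: "matching E M" using mM unfolding maximum_matching_def by blast
  define M' where "M' = insert {a,b} M"
  have mM': "matching E M'"
    unfolding matching_def
  proof (intro conjI ballI impI)
    fix e assume "e \<in> M'"
    then show "\<exists>x y. E x y \<and> e = {x, y}"
    proof (cases "e = {a,b}")
      case True then show ?thesis using eab by blast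
    next
      case False then have "e \<in> M" using \<open>e \<in> M'\<close> M'_def by blast
      then show ?thesis by (metis m matching_edge)
    qed
  next
    fix e f assume ef: "e \<in> M'" "f \<in> M'" "e \<noteq> f"
    have dM: "\<forall>e\<in>M. \<forall>f\<in>M. e \<noteq> f \<longrightarrow> e \<inter> f = {}" using m unfolding matching_def by (rule conjunct2)
    have na: "\<forall>e\<in>M. a \<notin> e" and nb: "\<forall>e\<in>M. b \<notin> e" using ma mb unfolding misses_def by auto
    have "e \<in> M \<and> f \<in> M \<or> (e = {a,b} \<and> f \<in> M) \<or> (f = {a,b} \<and> e \<in> M)"
      using ef M'_def by blast
    then show "e \<inter> f = {}"
    proof (elim disjE conjE)
      assume "e \<in> M" "f \<in> M" then show ?thesis using dM ef by blast
    next
      assume "e = {a,b}" "f \<in> M" then show ?thesis using na nb by blast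
    next
      assume "f = {a,b}" "e \<in> M" then show ?thesis using na nb by blast
    qed
  qed
  have miss': "\<And>w. misses M' w \<longleftrightarrow> misses M w \<and> w \<noteq> a \<and> w \<noteq> b"
    unfolding misses_def M'_def by auto
  have fin: "\<And>n. finite (B n)" using ex unfolding exhaustion_def by blast
  have le: "\<And>n. miss_seq B M' n \<le> miss_seq B M n"
    unfolding miss_seq_def by (rule card_mono) (use fin miss' in auto)
  have "a \<in> V" using g eab unfolding graph_def by blast
  then obtain n0 where n0: "a \<in> B n0" using ex unfolding exhaustion_def by blast
  have lt0: "miss_seq B M' n0 < miss_seq B M n0"
    unfolding miss_seq_def by (rule psubset_card_mono) (use fin miss' n0 ma in auto)
  have exn: "\<exists>n. miss_seq B M' n < miss_seq B M n" using lt0 by blast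
  define N where "N = (LEAST n. miss_seq B M' n < miss_seq B M n)"
  have "\<forall>n<N. miss_seq B M n = miss_seq B M' n"
    using not_less_Least[of _ "\<lambda>n. miss_seq B M' n < miss_seq B M n"] le N_def
    by (metis le_neq_implies_less)
  moreover have "miss_seq B M' N < miss_seq B M N" using LeastI_ex[OF exn] N_def by simp
  ultimately have "matching_less B M M'" unfolding matching_less_def by blast
  then show False using mM mM' unfolding maximum_matching_def by blast
qed


definition partner :: "'a set set \<Rightarrow> 'a \<Rightarrow> 'a" where
  "partner M a = (SOME b. {a,b} \<in> M)"

lemma partner_eq:
  assumes "matching E M" "{a,b} \<in> M"
  shows "partner M a = b"
proof -
  have "{a, partner M a} \<in> M" unfolding partner_def using assms(2) by (rule someI)
  then show ?thesis using partner_unique[OF assms(1)] assms(2) by blast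
qed

primrec altw :: "'a set set \<Rightarrow> 'a set set \<Rightarrow> 'a \<Rightarrow> nat \<Rightarrow> 'a" where
  "altw M M' x 0 = x"
| "altw M M' x (Suc k) = partner (if even k then M else M') (altw M M' x k)"

definition altok :: "'a set set \<Rightarrow> 'a set set \<Rightarrow> 'a \<Rightarrow> nat \<Rightarrow> bool" where
  "altok M M' x k \<longleftrightarrow> (\<forall>i<k. \<exists>b. {altw M M' x i, b} \<in> (if even i then M else M'))"

lemma altok_Suc: "altok M M' x (Suc k) \<longleftrightarrow> altok M M' x k \<and> (\<exists>b. {altw M M' x k, b} \<in> (if even k then M else M'))"
  unfolding altok_def unfolding All_less_Suc by blast

lemma altok_mono: "altok M M' x m \<Longrightarrow> k \<le> m \<Longrightarrow> altok M M' x k"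
  unfolding altok_def by simp

lemma step_edge:
  assumes "matching E M" "matching E M'" "altok M M' x (Suc k)"
  shows "{altw M M' x k, altw M M' x (Suc k)} \<in> (if even k then M else M')"
proof -
  have "\<exists>b. {altw M M' x k, b} \<in> (if even k then M else M')"
    using assms(3) unfolding altok_Suc by (rule conjunct2)
  then obtain b where b: "{altw M M' x k, b} \<in> (if even k then M else M')" ..
  have m: "matching E (if even k then M else M')" using assms(1,2) by simp
  have "altw M M' x (Suc k) = b" using partner_eq[OF m b] by simp
  then show ?thesis using b by simp
qed

lemma walk_next:
  assumes mM: "matching E M" and mM': "matching E M'" and mx: "misses M' x"
    and ok: "altok M M' x k"
    and e: "{altw M M' x k, b} \<in> M \<or> {altw M M' x k, b} \<in> M'"
  shows "\<exists>j. altok M M' x j \<and> altw M M' x j = b"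
proof (cases "{altw M M' x k, b} \<in> (if even k then M else M')")
  case True
  have mX: "matching E (if even k then M else M')" using mM mM' by simp
  have "altok M M' x (Suc k)" unfolding altok_Suc using ok True by (intro conjI exI)
  moreover have "altw M M' x (Suc k) = b" using partner_eq[OF mX True] by simp
  ultimately show ?thesis by (intro exI conjI)
next
  case False
  show ?thesis
  proof (cases k)
    case 0
    then have "{x, b} \<in> M'" using e False by simp
    then show ?thesis using mx unfolding misses_def by blast
  next
    case (Suc j)
    have okS: "altok M M' x (Suc j)" using ok Suc by simp
    have ej: "{altw M M' x j, altw M M' x k} \<in> (if even j then M else M')"
      using step_edge[OF mM mM' okS] Suc by simp
    have mY: "matching E (if even j then M else M')" using mM mM' by simp
    have eY: "{altw M M' x k, b} \<in> (if even j then M else M')"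
      using e False Suc by (cases "even j") auto
    have ej': "{altw M M' x k, altw M M' x j} \<in> (if even j then M else M')"
      using ej by (simp add: insert_commute)
    have "altw M M' x j = b" using partner_unique[OF mY ej' eY] .
    moreover have "altok M M' x j" using okS altok_mono by (metis le_SucI order_refl)
    ultimately show ?thesis by (intro exI conjI)
  qed
qed

lemma walk_closed:
  assumes mM: "matching E M" and mM': "matching E M'" and mx: "misses M' x"
    and eM: "e \<in> M \<union> M'" and ne: "e \<inter> {altw M M' x k | k. altok M M' x k} \<noteq> {}"
  shows "e \<subseteq> {altw M M' x k | k. altok M M' x k}"
proof -
  obtain p q where pq: "e = {p,q}"
    using eM matching_edge[OF mM] matching_edge[OF mM'] by (metis Un_iff)
  obtain w k where w: "w \<in> e" "w = altw M M' x k" "altok M M' x k" using ne by blast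
  show ?thesis
  proof (cases "w = p")
    case True
    have "{altw M M' x k, q} \<in> M \<or> {altw M M' x k, q} \<in> M'" using eM pq w True by auto
    then obtain j where "altok M M' x j" "altw M M' x j = q"
      using walk_next[OF mM mM' mx w(3)] by blast
    then show ?thesis using pq w True by blast
  next
    case False
    then have "w = q" using w pq by blast
    have "{altw M M' x k, p} \<in> M \<or> {altw M M' x k, p} \<in> M'" using eM pq w \<open>w = q\<close>
      by (auto simp: insert_commute)
    then obtain j where "altok M M' x j" "altw M M' x j = p"
      using walk_next[OF mM mM' mx w(3)] by blast
    then show ?thesis using pq w \<open>w = q\<close> by blast
  qed
qed

lemma walk_end:
  assumes mM: "matching E M" and mM': "matching E M'"
    and ok: "altok M M' x k" and u: "altw M M' x k = u" and mu: "misses M u" and ux: "u \<noteq> x"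
  shows "\<not> altok M M' x (Suc k)"
proof
  assume okS: "altok M M' x (Suc k)"
  obtain j where j: "k = Suc j" using u ux by (cases k) auto
  show False
  proof (cases "even j")
    case True
    then have "{altw M M' x j, u} \<in> M" using step_edge[OF mM mM'] ok j u by fastforce
    then show False using mu unfolding misses_def by blast
  next
    case False
    then have "even k" using j by simp
    have "\<exists>b. {altw M M' x k, b} \<in> (if even k then M else M')"
      using okS unfolding altok_Suc by (rule conjunct2)
    then obtain b where "{u, b} \<in> M" using \<open>even k\<close> u by auto
    then show False using mu unfolding misses_def by blast
  qed
qed

lemma walk_two_ends:
  assumes mM: "matching E M" and mM': "matching E M'"
    and u: "u \<in> {altw M M' x k | k. altok M M' x k}" and v: "v \<in> {altw M M' x k | k. altok M M' x k}"
    and mu: "misses M u" and mv: "misses M v" and ux: "u \<noteq> x" and vx: "v \<noteq> x"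
  shows "u = v"
proof -
  obtain k where k: "altok M M' x k" "altw M M' x k = u" using u by blast
  obtain m where m: "altok M M' x m" "altw M M' x m = v" using v by blast
  have nk: "\<not> altok M M' x (Suc k)" using walk_end[OF mM mM' k mu ux] .
  have nm: "\<not> altok M M' x (Suc m)" using walk_end[OF mM mM' m mv vx] .
  have "\<not> k < m" using nk altok_mono[OF m(1)] by (metis Suc_leI)
  moreover have "\<not> m < k" using nm altok_mono[OF k(1)] by (metis Suc_leI)
  ultimately have "k = m" by simp
  then show ?thesis using k m by simp
qed


lemma path_tail:
  assumes "is_path V E (u # x # rest)"
  shows "is_path V E (x # rest)" and "E u x"
proof -
  have e: "\<forall>i. Suc i < length (u # x # rest) \<longrightarrow> E ((u # x # rest) ! i) ((u # x # rest) ! Suc i)"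
    using assms unfolding is_path_def by blast
  show "E u x" using e[rule_format, of 0] by simp
  show "is_path V E (x # rest)"
    unfolding is_path_def
  proof (intro conjI allI impI)
    show "x # rest \<noteq> []" by simp
    show "distinct (x # rest)" using assms unfolding is_path_def by simp
    show "set (x # rest) \<subseteq> V" using assms unfolding is_path_def by simp
    fix i assume "Suc i < length (x # rest)"
    then show "E ((x # rest) ! i) ((x # rest) ! Suc i)" using e[rule_format, of "Suc i"] by simp
  qed
qed

lemma main:
  assumes g: "graph V E" and ex: "exhaustion V E B"
  shows "is_path V E P \<Longrightarrow> hd P = u \<Longrightarrow> last P = v \<Longrightarrow> u \<noteq> v \<Longrightarrow>
    (\<forall>y\<in>set P - {u, v}. \<not> critical E B y) \<Longrightarrow> maximum_matching E B M \<Longrightarrow>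
    misses M u \<Longrightarrow> misses M v \<Longrightarrow> False"
proof (induction P arbitrary: u M)
  case Nil
  then show ?case unfolding is_path_def by simp
next
  case (Cons u0 rest)
  have u0: "u0 = u" using Cons.prems(2) by simp
  have "rest \<noteq> []" using Cons.prems(2,3,4) by auto
  then obtain x rest' where rx: "rest = x # rest'" by (cases rest) auto
  have pP: "is_path V E (u # x # rest')" using Cons.prems(1) u0 rx by simp
  have eux: "E u x" using path_tail(2)[OF pP] .
  have dist: "distinct (u # x # rest')" using pP unfolding is_path_def by blast
  have mM: "matching E M" using Cons.prems(6) unfolding maximum_matching_def by blast
  show False
  proof (cases "rest' = []")
    case True
    then have "x = v" using Cons.prems(3) u0 rx by simp
    then show False using augment[OF ex g Cons.prems(6) eux Cons.prems(7)] Cons.prems(8) by simp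
  next
    case False
    have lv: "last (x # rest') = v" using Cons.prems(3) rx u0 by simp
    have vin: "v \<in> set rest'" using lv False last_in_set by (metis last_ConsR)
    have xv: "x \<noteq> v" using vin dist by auto
    have ux: "u \<noteq> x" using dist by auto
    have "x \<in> set (u0 # rest) - {u, v}" using rx xv ux by simp
    then have "\<not> critical E B x" using Cons.prems(5) by blast
    then obtain M' where mxM': "maximum_matching E B M'" and mx: "misses M' x"
      unfolding critical_def by blast
    have mM': "matching E M'" using mxM' unfolding maximum_matching_def by blast
    define C where "C = {altw M M' x k | k. altok M M' x k}"
    have xC: "x \<in> C" unfolding C_def altok_def by (intro CollectI exI[of _ 0]) simp
    have cl: "\<And>e. e \<in> (M - M') \<union> (M' - M) \<Longrightarrow> e \<inter> C \<noteq> {} \<Longrightarrow> e \<subseteq> C"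
      unfolding C_def using walk_closed[OF mM mM' mx] by blast
    have cl': "\<And>e. e \<in> (M' - M) \<union> (M - M') \<Longrightarrow> e \<inter> C \<noteq> {} \<Longrightarrow> e \<subseteq> C"
      using cl by blast
    define M1 where "M1 = {e\<in>M. e \<inter> C = {}} \<union> {e\<in>M'. e \<inter> C \<noteq> {}}"
    define M2 where "M2 = {e\<in>M'. e \<inter> C = {}} \<union> {e\<in>M. e \<inter> C \<noteq> {}}"
    have m1: "matching E M1" and ms1: "\<And>w. misses M1 w = (if w \<in> C then misses M' w else misses M w)"
      using swap[OF mM mM' cl] unfolding M1_def by auto
    have m2: "matching E M2" and ms2: "\<And>w. misses M2 w = (if w \<in> C then misses M w else misses M' w)"
      using swap[OF mM' mM cl'] unfolding M2_def by auto
    have fin: "\<And>n. finite (B n)" using ex unfolding exhaustion_def by blast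
    have seqeq: "miss_seq B M' = miss_seq B M" using seq_eq_max[OF mxM' Cons.prems(6)] .
    have sum: "\<And>n. miss_seq B M1 n + miss_seq B M2 n = 2 * miss_seq B M n"
    proof -
      fix n
      have "miss_seq B M1 n + miss_seq B M2 n = miss_seq B M n + miss_seq B M' n"
        unfolding miss_seq_def by (rule card_swap[OF fin]) (use ms1 ms2 in auto)
      then show "miss_seq B M1 n + miss_seq B M2 n = 2 * miss_seq B M n" using seqeq by simp
    qed
    have n1: "\<not> matching_less B M M1" using Cons.prems(6) m1 unfolding maximum_matching_def by blast
    have n2: "\<not> matching_less B M M2" using Cons.prems(6) m2 unfolding maximum_matching_def by blast
    have "miss_seq B M1 = miss_seq B M"
      by (rule sum_eq[OF sum]) (use n1 n2 in \<open>unfold matching_less_def, auto\<close>)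
    then have max1: "maximum_matching E B M1" using max_of_eq[OF Cons.prems(6) m1] by simp
    have m1x: "misses M1 x" using ms1 xC mx by simp
    show False
    proof (cases "u \<in> C")
      case False
      then have "misses M1 u" using ms1 Cons.prems(7) by simp
      then show False using augment[OF ex g max1 eux _ m1x] by blast
    next
      case uC: True
      show False
      proof (cases "v \<in> C")
        case True
        have "u = v" using walk_two_ends[OF mM mM' uC[unfolded C_def] True[unfolded C_def]
            Cons.prems(7,8)] ux xv by blast
        then show False using Cons.prems(4) by simp
      next
        case False
        then have m1v: "misses M1 v" using ms1 Cons.prems(8) by simp
        have "\<forall>y\<in>set rest - {x, v}. \<not> critical E B y"
          using Cons.prems(5) dist rx u0 by auto
        then show False
          using Cons.IH[of x M1] path_tail(1)[OF pP] rx lv xv max1 m1x m1v by simp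
      qed
    qed
  qed
qed

theorem lemmaA4:
  fixes V :: "'a set" and E :: "'a \<Rightarrow> 'a \<Rightarrow> bool" and B :: "nat \<Rightarrow> 'a set"
    and u v :: 'a and P :: "'a list"
  assumes "graph V E" and "connected_graph V E" and "countable V"
    and "exhaustion V E B"
    and "u \<in> V" and "v \<in> V" and "u \<noteq> v"
    and "is_path V E P" and "hd P = u" and "last P = v"
    and "\<forall>x\<in>set P - {u, v}. \<not> critical E B x"
  shows "\<not> (\<exists>M. maximum_matching E B M \<and> misses M u \<and> misses M v)"
  using main[OF assms(1,4) assms(8,9,10,7,11)] by blast

end
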